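(* For every integer $t\ge0$, \begin{align*} \kappa_2(2t+1)&=\tfrac{\kappa_2(t)+\kappa_2(t+1)}2+1;\\ \kappa_3(2t+1)&=\tfrac{\kappa_3(t)+\kappa_3(t+1)}2+\tfrac32\bigl(\kappa_2(t)-\kappa_2(t+1)\bigr);\\ \kappa_4(2t+1)&=\tfrac{\kappa_4(t)+\kappa_4(t+1)}2+2\bigl(\kappa_3(t)-\kappa_3(t+1)\bigr)+\tfrac34\bigl(\kappa_2(t)-\kappa_2(t+1)\bigr)^2-2;\\ \kappa_5(2t+1)&=\tfrac{\kappa_5(t)+\kappa_5(t+1)}2+\tfrac52\bigl(\kappa_4(t)-\kappa_4(t+1)\bigr)+\tfrac52\bigl(\kappa_2(t)-\kappa_2(t+1)\bigr)\bigl(\kappa_3(t)-\kappa_3(t+1)\bigr)-10\bigl(\kappa_2(t)-\kappa_2(t+1)\bigr). \end{align*} In particular, $\kappa_2(1)=2$, $\kappa_3(1)=-6$, $\kappa_4(1)=26$, $\kappa_5(1)=-150$.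
   Context: $s(n)$ is the number of $1$s in the binary expansion of $n\ge0$. For integers $j$ and $t\ge0$, $\delta(j,t)=\lim_{N\to\infty}\frac1N|\{0\le n<N: s(n+t)-s(n)=j\}|$; for each $t$ these form a probability distribution on $\mathbb Z$ with finite support bounded above and exponentially decaying tail. Let $\gamma_t(\vartheta)=\sum_{j\in\mathbb Z}\delta(j,t)e^{2\pi i j\vartheta}$. The cumulants $\kappa_j(t)$ ($j\ge0$) are the real numbers defined by $\log\gamma_t(\vartheta)=\sum_{j\ge0}\frac{\kappa_j(t)}{j!}(2\pi i\vartheta)^j$ for complex $\vartheta$ in a neighbourhood of $0$ (i.e. the cumulants of the distribution $\delta(\cdot,t)$); in particular $\kappa_j(0)=0$ for all $j$. *)

theory Defs
  imports "HOL-Analysis.Analysis"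
begin

fun bsum :: "nat \<Rightarrow> nat" where
  "bsum n = (if n = 0 then 0 else n mod 2 + bsum (n div 2))"

definition delta :: "int \<Rightarrow> nat \<Rightarrow> real" where
  "delta j t = lim (\<lambda>N. real (card {n. n < N \<and> int (bsum (n + t)) - int (bsum n) = j}) / real N)"

definition gamma_t :: "nat \<Rightarrow> complex \<Rightarrow> complex" where
  "gamma_t t \<theta> = (\<Sum>\<^sub>\<infinity> j\<in>(UNIV::int set). complex_of_real (delta j t) * exp (2 * complex_of_real pi * \<i> * of_int j * \<theta>))"

text \<open>The cumulant sequence: the real numbers kappa_j(t) with
  log gamma_t(theta) = sum_j kappa_j(t)/j! (2 pi i theta)^j for theta in a neighbourhood of 0
  (log = principal branch Ln, which is the branch with log gamma_t(0) = log 1 = 0).\<close>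
definition cumulants :: "nat \<Rightarrow> nat \<Rightarrow> real" where
  "cumulants t = (SOME \<kappa>. \<exists>e>0. \<forall>\<theta>. cmod \<theta> < e \<longrightarrow>
      ((\<lambda>j. complex_of_real (\<kappa> j) / of_nat (fact j) * (2 * complex_of_real pi * \<i> * \<theta>) ^ j)
         sums Ln (gamma_t t \<theta>)))"

definition kappa :: "nat \<Rightarrow> nat \<Rightarrow> real" where
  "kappa j t = cumulants t j"

end

theory Submission
  imports Defs "HOL-Complex_Analysis.Complex_Analysis"
begin

declare bsum.simps[simp del]

lemma bsum0[simp]: "bsum 0 = 0"
  by (subst bsum.simps) simp

lemma bsum_even: "bsum (2*m) = bsum m"
  by (cases "m = 0") (simp, subst bsum.simps, simp)

lemma bsum_odd: "bsum (2*m+1) = bsum m + 1"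
  by (subst bsum.simps) auto

lemma bsum_odd': "bsum (Suc (2*m)) = Suc (bsum m)"
  using bsum_odd[of m] by simp

lemma t_cases:
  fixes t :: nat
  obtains "t = 0" | "t = 1" | u where "t = 2*u" "u \<ge> 1" | u where "t = 2*u+1" "u \<ge> 1"
proof -
  consider "even t" | "odd t" by blast
  then show ?thesis
  proof cases
    case 1
    then obtain u where u: "t = 2*u" by blast
    show ?thesis
    proof (cases "u = 0")
      case True then show ?thesis using u that(1) by simp
    next
      case False then show ?thesis using u that(3)[of u] by simp
    qed
  next
    case 2
    then obtain u where u: "t = 2*u+1" using oddE by blast
    show ?thesis
    proof (cases "u = 0")
      case True then show ?thesis using u that(2) by simp
    next
      case False then show ?thesis using u that(4)[of u] by simp
    qed
  qed
qed

definition cnt :: "int \<Rightarrow> nat \<Rightarrow> nat \<Rightarrow> nat" where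
  "cnt j t N = card {n. n < N \<and> int (bsum (n + t)) - int (bsum n) = j}"

lemma card_step: "card {n. n < Suc K \<and> Q n} = card {n. n < K \<and> Q n} + (if Q K then 1 else 0)"
proof -
  have "{n. n < Suc K \<and> Q n} = (if Q K then insert K {n. n < K \<and> Q n} else {n. n < K \<and> Q n})"
    by (auto simp: less_Suc_eq)
  then show ?thesis by (simp add: card_insert_disjoint)
qed

lemma card_split:
  fixes N :: nat
  shows "card {n. n < N \<and> P n} =
   card {m. m < (N+1) div 2 \<and> P (2*m)} + card {m. m < N div 2 \<and> P (2*m+1)}"
proof (induction N)
  case 0
  then show ?case by simp
next
  case (Suc N)
  have A: "card {n. n < Suc N \<and> P n} = card {n. n < N \<and> P n} + (if P N then 1 else 0)"
    by (rule card_step)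
  show ?case
  proof (cases "even N")
    case True
    then obtain m where m: "N = 2*m" by blast
    have B: "card {m'. m' < Suc m \<and> P (2*m')} = card {m'. m' < m \<and> P (2*m')} + (if P (2*m) then 1 else 0)"
      by (rule card_step)
    show ?thesis using A B Suc.IH m by simp
  next
    case False
    then obtain m where m: "N = 2*m+1" using oddE by blast
    have B: "card {m'. m' < Suc m \<and> P (2*m'+1)} = card {m'. m' < m \<and> P (2*m'+1)} + (if P (2*m+1) then 1 else 0)"
      by (rule card_step)
    show ?thesis using A B Suc.IH m by simp
  qed
qed

lemma cnt_even: "cnt j (2*u) N = cnt j u ((N+1) div 2) + cnt j u (N div 2)"
proof -
  have e1: "bsum (2*m + 2*u) = bsum (m+u)" for m
    by (metis bsum_even distrib_left)
  have e2: "bsum (2*m + 1 + 2*u) = bsum (m+u) + 1" for m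
  proof -
    have "2*m + 1 + 2*u = 2*(m+u)+1" by simp
    then show ?thesis by (simp only: bsum_odd)
  qed
  have s1: "{m. m < (N+1) div 2 \<and> int (bsum (2*m + 2*u)) - int (bsum (2*m)) = j}
      = {m. m < (N+1) div 2 \<and> int (bsum (m + u)) - int (bsum m) = j}"
    by (simp only: e1 bsum_even)
  have s2: "{m. m < N div 2 \<and> int (bsum (2*m + 1 + 2*u)) - int (bsum (2*m+1)) = j}
      = {m. m < N div 2 \<and> int (bsum (m + u)) - int (bsum m) = j}"
    by (simp only: e2 bsum_odd) simp
  show ?thesis unfolding cnt_def
    by (subst card_split) (simp only: s1 s2)
qed

lemma cnt_odd: "cnt j (2*u+1) N = cnt (j-1) u ((N+1) div 2) + cnt (j+1) (u+1) (N div 2)"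
proof -
  have e1: "bsum (2*m + (2*u+1)) = bsum (m+u) + 1" for m
    by (metis bsum_odd distrib_left add.assoc)
  have e2: "bsum (2*m + 1 + (2*u+1)) = bsum (m+(u+1))" for m
  proof -
    have "2*m + 1 + (2*u+1) = 2*(m+(u+1))" by simp
    then show ?thesis by (simp only: bsum_even)
  qed
  have s1: "{m. m < (N+1) div 2 \<and> int (bsum (2*m + (2*u+1))) - int (bsum (2*m)) = j}
      = {m. m < (N+1) div 2 \<and> int (bsum (m + u)) - int (bsum m) = j - 1}"
    by (simp only: e1 bsum_even) (auto)
  have s2: "{m. m < N div 2 \<and> int (bsum (2*m + 1 + (2*u+1))) - int (bsum (2*m+1)) = j}
      = {m. m < N div 2 \<and> int (bsum (m + (u+1))) - int (bsum m) = j + 1}"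
    by (simp only: e2 bsum_odd) (auto)
  show ?thesis unfolding cnt_def
    by (subst card_split) (simp only: s1 s2)
qed

lemma cnt0: "cnt j 0 N = (if j = 0 then N else 0)"
  unfolding cnt_def by auto

lemma cnt1: "cnt j 1 N = cnt (j-1) 0 ((N+1) div 2) + cnt (j+1) 1 (N div 2)"
  using cnt_odd[of j 0 N] by simp


lemma lim_comp:
  fixes a g :: "nat \<Rightarrow> nat"
  assumes a: "(\<lambda>N. real (a N) / real N) \<longlonglongrightarrow> L"
   and g: "\<And>N. \<bar>real (g N) - real N / 2\<bar> \<le> 1"
  shows "(\<lambda>N. real (a (g N)) / real N) \<longlonglongrightarrow> L / 2"
proof -
  have gl: "filterlim g sequentially sequentially"
    unfolding filterlim_at_top eventually_sequentially
  proof (intro allI exI allI impI)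
    fix b N :: nat assume "2*b+2 \<le> N"
    then have "real (2*b+2) \<le> real N" by linarith
    with g[of N] have "real b \<le> real (g N)" by simp
    then show "b \<le> g N" by simp
  qed
  have r0: "(\<lambda>N. real (g N) / real N - 1/2) \<longlonglongrightarrow> 0"
  proof (rule Lim_null_comparison)
    show "\<forall>\<^sub>F N in sequentially. norm (real (g N) / real N - 1/2) \<le> 1 / real N"
      unfolding eventually_sequentially
    proof (intro exI allI impI)
      fix N :: nat assume "1 \<le> N"
      then have N: "real N > 0" by simp
      have "real (g N) / real N - 1/2 = (real (g N) - real N / 2) / real N"
        using N by (simp add: field_simps)
      then have "norm (real (g N) / real N - 1/2) = \<bar>real (g N) - real N / 2\<bar> / real N"
        using N by simp
      also have "\<dots> \<le> 1 / real N" using g[of N] N by (simp add: divide_right_mono)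
      finally show "norm (real (g N) / real N - 1/2) \<le> 1 / real N" .
    qed
    show "(\<lambda>N. 1 / real N) \<longlonglongrightarrow> 0" by (rule lim_inverse_n')
  qed
  then have r: "(\<lambda>N. real (g N) / real N) \<longlonglongrightarrow> 1/2"
    by (simp add: Lim_null[symmetric])
  have c: "(\<lambda>N. real (a (g N)) / real (g N)) \<longlonglongrightarrow> L"
    using filterlim_compose[OF a gl] by simp
  have m: "(\<lambda>N. real (a (g N)) / real (g N) * (real (g N) / real N)) \<longlonglongrightarrow> L * (1/2)"
    by (rule tendsto_mult[OF c r])
  have ev: "\<forall>\<^sub>F N in sequentially. real (a (g N)) / real (g N) * (real (g N) / real N) = real (a (g N)) / real N"
  proof -
    have "\<forall>\<^sub>F N in sequentially. 1 \<le> g N" using gl unfolding filterlim_at_top by blast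
    then show ?thesis
    proof eventually_elim
      case (elim N)
      then have "real (g N) \<noteq> 0" by simp
      then show ?case by (cases "N = 0") (simp_all add: field_simps)
    qed
  qed
  show ?thesis using Lim_transform_eventually[OF m ev] by simp
qed

lemma div2_bound: "\<bar>real (N div 2) - real N / 2\<bar> \<le> 1"
proof -
  have "N = 2*(N div 2) + N mod 2" by simp
  then have "real N = real (2*(N div 2) + N mod 2)" by (rule arg_cong)
  then have "real N = 2 * real (N div 2) + real (N mod 2)"
    by (simp only: of_nat_add of_nat_mult of_nat_numeral)
  then have "real (N div 2) - real N / 2 = - real (N mod 2) / 2" by linarith
  moreover have "real (N mod 2) \<le> 1" by simp
  ultimately show ?thesis by simp
qed

lemma div2_bound': "\<bar>real ((N+1) div 2) - real N / 2\<bar> \<le> 1"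
  using div2_bound[of "N+1"] by simp

lemma lim_id: "(\<lambda>N. real N / real N) \<longlonglongrightarrow> 1"
proof -
  have "\<forall>\<^sub>F N in sequentially. 1 = real N / real N"
    unfolding eventually_sequentially by (intro exI[of _ 1]) auto
  then show ?thesis by (rule Lim_transform_eventually[OF tendsto_const])
qed

lemma dens0: "(\<lambda>N. real (cnt j 0 N) / real N) \<longlonglongrightarrow> (if j = 0 then 1 else 0)"
  using lim_id by (cases "j = 0") (simp_all add: cnt0)

lemma cnt1_zero: "j \<ge> 2 \<Longrightarrow> cnt j 1 N = 0"
proof (induction N arbitrary: j rule: less_induct)
  case (less N)
  show ?case
  proof (cases "N = 0")
    case True then show ?thesis by (simp add: cnt_def)
  next
    case False
    then have "N div 2 < N" by simp
    then have a: "cnt (j+1) 1 (N div 2) = 0" using less by simp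
    have b: "cnt (j-1) 0 ((N+1) div 2) = 0" using less.prems by (simp add: cnt0)
    show ?thesis using cnt1[of j N] a b by simp
  qed
qed

definition d1 :: "int \<Rightarrow> real" where
  "d1 j = (if j \<le> 1 then 1 / 2 ^ nat (2 - j) else 0)"

lemma d1_k: "d1 (1 - int k) = 1 / 2^(k+1)"
proof -
  have "nat (2 - (1 - int k)) = k+1" by arith
  then show ?thesis by (simp add: d1_def)
qed

lemma dens1_aux: "(\<lambda>N. real (cnt (1 - int k) 1 N) / real N) \<longlonglongrightarrow> d1 (1 - int k)"
proof (induction k)
  case 0
  have "cnt 1 1 N = (N+1) div 2" for N
    using cnt1[of 1 N] cnt1_zero[of 2 "N div 2"] by (simp add: cnt0)
  then show ?case using lim_comp[OF lim_id div2_bound'] by (simp add: d1_def)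
next
  case (Suc k)
  have c: "cnt (1 - int (Suc k)) 1 N = cnt (1 - int k) 1 (N div 2)" for N
    using cnt1[of "1 - int (Suc k)" N] by (simp add: cnt0)
  have e: "d1 (1 - int (Suc k)) = d1 (1 - int k) / 2"
    by (simp only: d1_k) simp
  have L: "(\<lambda>N. real (cnt (1 - int k) 1 (N div 2)) / real N) \<longlonglongrightarrow> d1 (1 - int k) / 2"
    by (rule lim_comp[OF Suc div2_bound])
  show ?case unfolding c e using L .
qed

lemma dens1: "(\<lambda>N. real (cnt j 1 N) / real N) \<longlonglongrightarrow> d1 j"
proof (cases "j \<le> 1")
  case True
  have "(\<lambda>N. real (cnt (1 - int (nat (1 - j))) 1 N) / real N) \<longlonglongrightarrow> d1 (1 - int (nat (1 - j)))"
    by (rule dens1_aux)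
  moreover have "1 - int (nat (1 - j)) = j" using True by simp
  ultimately show ?thesis by simp
next
  case False
  then have "cnt j 1 N = 0" for N using cnt1_zero[of j N] by simp
  then have "(\<lambda>N. real (cnt j 1 N) / real N) = (\<lambda>N. 0)" by simp
  moreover have "d1 j = 0" using False by (simp add: d1_def)
  ultimately show ?thesis by simp
qed

lemma conv_all: "convergent (\<lambda>N. real (cnt j t N) / real N)"
proof (induction t arbitrary: j rule: less_induct)
  case (less t)
  show ?case
  proof (cases t rule: t_cases)
    case 1 show ?thesis unfolding 1 convergent_def by (rule exI, rule dens0)
  next
    case 2 show ?thesis unfolding 2 convergent_def by (rule exI, rule dens1)
  next
    case (3 u)
    then have "u < t" by simp
    then have "convergent (\<lambda>N. real (cnt j u N) / real N)" by (rule less.IH)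
    then obtain L where L: "(\<lambda>N. real (cnt j u N) / real N) \<longlonglongrightarrow> L"
      unfolding convergent_def by blast
    have A: "(\<lambda>N. real (cnt j u ((N+1) div 2)) / real N + real (cnt j u (N div 2)) / real N) \<longlonglongrightarrow> L/2 + L/2"
      by (intro tendsto_add lim_comp[OF L div2_bound] lim_comp[OF L div2_bound'])
    have B: "(\<lambda>N. real (cnt j (2*u) N) / real N) = (\<lambda>N. real (cnt j u ((N+1) div 2)) / real N + real (cnt j u (N div 2)) / real N)"
      by (simp only: cnt_even of_nat_add add_divide_distrib)
    have "(\<lambda>N. real (cnt j (2*u) N) / real N) \<longlonglongrightarrow> L/2 + L/2"
      unfolding B by (rule A)
    then show ?thesis unfolding 3(1) convergent_def by (rule exI)
  next
    case (4 u)
    then have "u < t" "u+1 < t" by simp_all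
    have "convergent (\<lambda>N. real (cnt (j-1) u N) / real N)"
      using \<open>u < t\<close> by (rule less.IH)
    moreover have "convergent (\<lambda>N. real (cnt (j+1) (u+1) N) / real N)"
      using \<open>u+1 < t\<close> by (rule less.IH)
    ultimately obtain L1 L2 where L1: "(\<lambda>N. real (cnt (j-1) u N) / real N) \<longlonglongrightarrow> L1"
      and L2: "(\<lambda>N. real (cnt (j+1) (u+1) N) / real N) \<longlonglongrightarrow> L2"
      unfolding convergent_def by blast
    have A: "(\<lambda>N. real (cnt (j-1) u ((N+1) div 2)) / real N + real (cnt (j+1) (u+1) (N div 2)) / real N) \<longlonglongrightarrow> L1/2 + L2/2"
      by (intro tendsto_add lim_comp[OF L2 div2_bound] lim_comp[OF L1 div2_bound'])
    have B: "(\<lambda>N. real (cnt j (2*u+1) N) / real N) = (\<lambda>N. real (cnt (j-1) u ((N+1) div 2)) / real N + real (cnt (j+1) (u+1) (N div 2)) / real N)"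
      by (simp only: cnt_odd of_nat_add add_divide_distrib)
    have "(\<lambda>N. real (cnt j (2*u+1) N) / real N) \<longlonglongrightarrow> L1/2 + L2/2"
      unfolding B by (rule A)
    then show ?thesis unfolding 4(1) convergent_def by (rule exI)
  qed
qed

lemma delta_lim: "(\<lambda>N. real (cnt j t N) / real N) \<longlonglongrightarrow> delta j t"
proof -
  have "delta j t = lim (\<lambda>N. real (cnt j t N) / real N)" by (simp only: delta_def cnt_def)
  then show ?thesis using conv_all[of j t] by (simp add: convergent_LIMSEQ_iff)
qed

lemma delta0: "delta j 0 = (if j = 0 then 1 else 0)"
  using LIMSEQ_unique[OF delta_lim dens0] .

lemma delta1: "delta j 1 = d1 j"
  using LIMSEQ_unique[OF delta_lim dens1] .

lemma delta1': "delta j (Suc 0) = d1 j"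
  using delta1 by simp

lemma delta_even: "delta j (2*u) = delta j u"
proof -
  have "(\<lambda>N. real (cnt j u ((N+1) div 2)) / real N + real (cnt j u (N div 2)) / real N) \<longlonglongrightarrow> delta j u/2 + delta j u/2"
    by (intro tendsto_add lim_comp[OF delta_lim div2_bound] lim_comp[OF delta_lim div2_bound'])
  moreover have "(\<lambda>N. real (cnt j (2*u) N) / real N) = (\<lambda>N. real (cnt j u ((N+1) div 2)) / real N + real (cnt j u (N div 2)) / real N)"
      by (simp only: cnt_even of_nat_add add_divide_distrib)
  ultimately have "(\<lambda>N. real (cnt j (2*u) N) / real N) \<longlonglongrightarrow> delta j u"
    by simp
  then show ?thesis using LIMSEQ_unique[OF delta_lim] by blast
qed

lemma delta_odd: "delta j (2*u+1) = (delta (j-1) u + delta (j+1) (u+1)) / 2"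
proof -
  have "(\<lambda>N. real (cnt (j-1) u ((N+1) div 2)) / real N + real (cnt (j+1) (u+1) (N div 2)) / real N) \<longlonglongrightarrow> delta (j-1) u/2 + delta (j+1) (u+1)/2"
    by (intro tendsto_add lim_comp[OF delta_lim div2_bound] lim_comp[OF delta_lim div2_bound'])
  moreover have "(\<lambda>N. real (cnt j (2*u+1) N) / real N) = (\<lambda>N. real (cnt (j-1) u ((N+1) div 2)) / real N + real (cnt (j+1) (u+1) (N div 2)) / real N)"
      by (simp only: cnt_odd of_nat_add add_divide_distrib)
  ultimately have "(\<lambda>N. real (cnt j (2*u+1) N) / real N) \<longlonglongrightarrow> (delta (j-1) u + delta (j+1) (u+1)) / 2"
    by (simp add: add_divide_distrib)
  then show ?thesis using LIMSEQ_unique[OF delta_lim] by blast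
qed



function Mf :: "nat \<Rightarrow> complex \<Rightarrow> complex" where
  "Mf t w = (if t = 0 then 1 else if t = 1 then exp w / (2 - exp (-w))
     else if even t then Mf (t div 2) w
     else (exp w * Mf (t div 2) w + exp (-w) * Mf (t div 2 + 1) w) / 2)"
  by pat_completeness auto
termination by (relation "Wellfounded.measure fst") (auto elim!: oddE)

declare Mf.simps[simp del]

lemma Mf0: "Mf 0 w = 1" by (subst Mf.simps) simp
lemma Mf1: "Mf 1 w = exp w / (2 - exp (-w))" by (subst Mf.simps) simp
lemma Mf1': "Mf (Suc 0) w = exp w / (2 - exp (-w))" by (subst Mf.simps) simp
lemma Mf_even: "u \<ge> 1 \<Longrightarrow> Mf (2*u) w = Mf u w" by (subst Mf.simps) simp
lemma Mf_odd: "u \<ge> 1 \<Longrightarrow> Mf (2*u+1) w = (exp w * Mf u w + exp (-w) * Mf (u+1) w) / 2"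
  by (subst Mf.simps) simp

lemma Mf_odd': "u \<ge> 1 \<Longrightarrow> Mf (Suc (2*u)) w = (exp w * Mf u w + exp (-w) * Mf (Suc u) w) / 2"
  using Mf_odd[of u w] by simp

lemma exp_half: "exp (1/2::real) < 2"
proof (rule ccontr)
  assume "\<not> exp (1/2::real) < 2"
  then have "2 * 2 \<le> exp (1/2::real) * exp (1/2)" by (intro mult_mono) auto
  also have "\<dots> = exp 1" by (simp add: exp_add[symmetric])
  also have "\<dots> \<le> 3" by (rule exp_le)
  finally show False by simp
qed

lemma norm_exp_neg_lt: "cmod w < 1/2 \<Longrightarrow> cmod (exp (-w)) < 2"
proof -
  assume a: "cmod w < 1/2"
  have "cmod (exp (-w)) \<le> exp (cmod (-w))" by (rule norm_exp)
  also have "\<dots> < exp (1/2)" using a by simp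
  also have "\<dots> < 2" by (rule exp_half)
  finally show ?thesis .
qed

lemma den_nz: "cmod w < 1/2 \<Longrightarrow> 2 - exp (-w) \<noteq> 0"
proof
  assume a: "cmod w < 1/2" and b: "2 - exp (-w) = 0"
  have n: "cmod (exp (-w)) < 2" by (rule norm_exp_neg_lt[OF a])
  from b have "exp (-w) = 2" by simp
  then have "cmod (exp (-w)) = 2" by (simp only:) simp
  with n show False by simp
qed

lemma den_nz2: "cmod w * 2 < 1 \<Longrightarrow> exp (-w) = 2 \<Longrightarrow> False"
  using den_nz[of w] by simp

lemma Mf_odd0: "cmod w < 1/2 \<Longrightarrow> Mf 1 w = (exp w * Mf 0 w + exp (-w) * Mf 1 w) / 2"
  using den_nz[of w] by (simp add: Mf0 Mf1 Mf1' field_simps)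

lemma bij_shift: "bij_betw (\<lambda>j::int. j + c) UNIV UNIV"
  by (rule bij_betwI[where g="\<lambda>j. j - c"]) auto

lemma hs_shift:
  assumes "((\<lambda>j. complex_of_real (delta j u) * exp (of_int j * w)) has_sum S) UNIV"
  shows "((\<lambda>j. complex_of_real (delta (j + c) u) * exp (of_int j * w)) has_sum (exp (- of_int c * w) * S)) UNIV"
proof -
  have "((\<lambda>j. exp (- of_int c * w) * (complex_of_real (delta j u) * exp (of_int j * w))) has_sum (exp (- of_int c * w) * S)) UNIV"
    by (rule has_sum_cmult_right[OF assms])
  then have "((\<lambda>j. exp (- of_int c * w) * (complex_of_real (delta (j + c) u) * exp (of_int (j + c) * w))) has_sum (exp (- of_int c * w) * S)) UNIV"
    using has_sum_reindex_bij_betw[OF bij_shift[of c], where f="\<lambda>j. exp (- of_int c * w) * (complex_of_real (delta j u) * exp (of_int j * w))"]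
    by simp
  moreover have "exp (- of_int c * w) * (complex_of_real (delta (j + c) u) * exp (of_int (j + c) * w))
     = complex_of_real (delta (j + c) u) * exp (of_int j * w)" for j
  proof -
    have "exp (- of_int c * w) * exp (of_int (j + c) * w) = exp (of_int j * w)"
      by (simp add: exp_add[symmetric] algebra_simps)
    then show ?thesis by (metis mult.left_commute)
  qed
  then have "(\<lambda>j. exp (- of_int c * w) * (complex_of_real (delta (j + c) u) * exp (of_int (j + c) * w)))
     = (\<lambda>j. complex_of_real (delta (j + c) u) * exp (of_int j * w))" by (rule ext)
  ultimately show ?thesis by simp
qed

lemma hs1:
  assumes w: "cmod w < 1/2"
  shows "((\<lambda>j. complex_of_real (delta j 1) * exp (of_int j * w)) has_sum Mf 1 w) UNIV"
proof -
  define q where "q = exp (-w) / 2"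
  have q: "norm q < 1" using norm_exp_neg_lt[OF w] by (simp add: q_def norm_divide)
  define g where "g k = exp w / 2 * q ^ k" for k
  have gs: "g sums (exp w / 2 * (1 / (1 - q)))"
    unfolding g_def by (intro sums_mult geometric_sums q)
  have gn: "summable (\<lambda>k. norm (g k))"
    unfolding g_def norm_mult norm_power
    by (intro summable_mult summable_geometric) (use q in simp)
  have gh: "(g has_sum (exp w / 2 * (1 / (1 - q)))) UNIV"
    by (rule norm_summable_imp_has_sum[OF gn gs])
  have val: "exp w / 2 * (1 / (1 - q)) = Mf 1 w"
    using den_nz[OF w] by (simp add: Mf1 Mf1' q_def field_simps)
  define f where "f j = complex_of_real (delta j 1) * exp (of_int j * w)" for j
  define h where "h k = 1 - int k" for k
  have inj: "inj_on h UNIV" by (auto simp: inj_on_def h_def)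
  have img: "h ` UNIV = {..1}"
  proof
    show "h ` UNIV \<subseteq> {..1}" by (auto simp: h_def)
    show "{..1} \<subseteq> h ` UNIV"
    proof
      fix j :: int assume "j \<in> {..1}"
      then have "j = h (nat (1 - j))" by (simp add: h_def)
      then show "j \<in> h ` UNIV" by blast
    qed
  qed
  have fh: "(f \<circ> h) k = g k" for k
  proof -
    have e: "of_int (1 - int k) * w = w + of_nat k * (-w)" by (simp add: algebra_simps)
    have "(f \<circ> h) k = complex_of_real (d1 (1 - int k)) * exp (of_int (1 - int k) * w)"
      unfolding o_def f_def h_def delta1 ..
    also have "\<dots> = complex_of_real (1 / 2^(k+1)) * exp (w + of_nat k * (-w))"
      by (simp only: d1_k e)
    also have "\<dots> = complex_of_real (1 / 2^(k+1)) * (exp w * exp (-w) ^ k)"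
      by (simp only: exp_add exp_of_nat_mult)
    also have "\<dots> = exp w / 2 * q ^ k"
      by (simp add: q_def power_divide field_simps)
    finally show ?thesis by (simp add: g_def)
  qed
  have fg: "f \<circ> h = g" by (rule ext) (rule fh)
  have "(f has_sum Mf 1 w) (h ` UNIV)"
    unfolding has_sum_reindex[OF inj] fg using gh unfolding val .
  then have "(f has_sum Mf 1 w) {..1}" unfolding img .
  moreover have "(f has_sum Mf 1 w) UNIV \<longleftrightarrow> (f has_sum Mf 1 w) {..1}"
    by (rule has_sum_cong_neutral) (auto simp: f_def delta1 delta1' d1_def)
  ultimately have "(f has_sum Mf 1 w) UNIV" by simp
  then show ?thesis unfolding f_def .
qed

lemma hs:
  assumes w: "cmod w < 1/2"
  shows "((\<lambda>j. complex_of_real (delta j t) * exp (of_int j * w)) has_sum Mf t w) UNIV"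
proof (induction t rule: less_induct)
  case (less t)
  show ?case
  proof (cases t rule: t_cases)
    case 1
    have "((\<lambda>j. complex_of_real (delta j t) * exp (of_int j * w)) has_sum Mf t w) UNIV
       \<longleftrightarrow> ((\<lambda>j. complex_of_real (delta j t) * exp (of_int j * w)) has_sum Mf t w) {0}"
      by (rule has_sum_cong_neutral) (auto simp: 1 delta0)
    also have "\<dots>" using has_sum_finite[of "{0::int}" "\<lambda>j. complex_of_real (delta j t) * exp (of_int j * w)"]
      by (simp add: 1 delta0 Mf0)
    finally show ?thesis .
  next
    case 2 then show ?thesis using hs1[OF w] by simp
  next
    case (3 u)
    then have "u < t" by simp
    then show ?thesis using less 3 by (simp add: delta_even Mf_even)
  next
    case (4 u)
    then have "u < t" "u + 1 < t" by simp_all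
    have A: "((\<lambda>j. complex_of_real (delta (j + (-1)) u) * exp (of_int j * w)) has_sum (exp (- of_int (-1) * w) * Mf u w)) UNIV"
      by (rule hs_shift[OF less.IH[OF \<open>u < t\<close>]])
    have B: "((\<lambda>j. complex_of_real (delta (j + 1) (u+1)) * exp (of_int j * w)) has_sum (exp (- of_int 1 * w) * Mf (u+1) w)) UNIV"
      by (rule hs_shift[OF less.IH[OF \<open>u + 1 < t\<close>]])
    have H: "((\<lambda>j. (1/2) * (complex_of_real (delta (j + (-1)) u) * exp (of_int j * w) + complex_of_real (delta (j + 1) (u+1)) * exp (of_int j * w)))
       has_sum ((1/2) * (exp (- of_int (-1) * w) * Mf u w + exp (- of_int 1 * w) * Mf (u+1) w))) UNIV"
      by (intro has_sum_cmult_right has_sum_add A B)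
    have V: "(1/2) * (exp (- of_int (-1) * w) * Mf u w + exp (- of_int 1 * w) * Mf (u+1) w) = Mf t w"
      using 4 by (simp add: Mf_odd Mf_odd')
    have F: "(\<lambda>j. (1/2) * (complex_of_real (delta (j + (-1)) u) * exp (of_int j * w) + complex_of_real (delta (j + 1) (u+1)) * exp (of_int j * w)))
       = (\<lambda>j. complex_of_real (delta j t) * exp (of_int j * w))"
      unfolding 4(1) delta_odd by (intro ext) (simp add: algebra_simps)
    show ?thesis using H unfolding V F .
  qed
qed

lemma gamma_Mf:
  assumes "cmod \<theta> < 1 / (4 * pi)"
  shows "gamma_t t \<theta> = Mf t (2 * complex_of_real pi * \<i> * \<theta>)"
proof -
  define w where "w = 2 * complex_of_real pi * \<i> * \<theta>"
  have "cmod w = 2 * pi * cmod \<theta>" by (simp add: w_def norm_mult)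
  also have "\<dots> < 2 * pi * (1 / (4 * pi))" by (rule mult_strict_left_mono[OF assms]) simp
  also have "\<dots> = 1/2" by simp
  finally have w: "cmod w < 1/2" .
  have e: "2 * complex_of_real pi * \<i> * of_int j * \<theta> = of_int j * w" for j
    by (simp add: w_def algebra_simps)
  show ?thesis unfolding gamma_t_def e w_def[symmetric]
    by (rule infsumI[OF hs[OF w]])
qed

lemma Mf_holo: "Mf t holomorphic_on ball 0 (1/2)"
proof (induction t rule: less_induct)
  case (less t)
  show ?case
  proof (cases t rule: t_cases)
    case 1
    then show ?thesis by (simp add: Mf0[abs_def])
  next
    case 2
    have "(\<lambda>w. exp w / (2 - exp (-w))) holomorphic_on ball 0 (1/2)"
      by (intro holomorphic_intros) (auto dest: den_nz2)
    then show ?thesis using 2 by (simp add: Mf1[abs_def] Mf1'[abs_def])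
  next
    case (3 u)
    then have "u < t" by simp
    moreover have "Mf t = Mf u"
      using 3 by (intro ext) (simp add: Mf_even)
    ultimately show ?thesis using less by simp
  next
    case (4 u)
    then have "u < t" "u + 1 < t" by simp_all
    then have "(\<lambda>w. (exp w * Mf u w + exp (-w) * Mf (u+1) w) / 2) holomorphic_on ball 0 (1/2)"
      using less by (intro holomorphic_intros) auto
    moreover have "Mf t = (\<lambda>w. (exp w * Mf u w + exp (-w) * Mf (u+1) w) / 2)"
      using 4 by (intro ext) (simp add: Mf_odd')
    ultimately show ?thesis by simp
  qed
qed

lemma Mf_at0: "Mf t 0 = 1"
proof (induction t rule: less_induct)
  case (less t)
  show ?case
  proof (cases t rule: t_cases)
    case 1 then show ?thesis by (simp add: Mf0)
  next
    case 2 then show ?thesis by (simp add: Mf1 Mf1')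
  next
    case (3 u) then have "u < t" by simp
    then show ?thesis using less 3 by (simp add: Mf_even)
  next
    case (4 u) then have "u < t" "u + 1 < t" by simp_all
    then show ?thesis using less 4 by (simp add: Mf_odd Mf_odd')
  qed
qed

lemma Mf_real: "\<bar>x\<bar> < 1/2 \<Longrightarrow> \<exists>p>0. Mf t (complex_of_real x) = complex_of_real p"
proof (induction t rule: less_induct)
  case (less t)
  show ?case
  proof (cases t rule: t_cases)
    case 1 then show ?thesis by (intro exI[of _ 1]) (simp add: Mf0)
  next
    case 2
    have "exp (-x) < exp (1/2)" using less.prems by simp
    then have d: "2 - exp (-x) > 0" using exp_half by linarith
    show ?thesis using 2 d
      by (intro exI[of _ "exp x / (2 - exp (-x))"]) (simp add: Mf1 Mf1' exp_of_real[symmetric])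
  next
    case (3 u) then have "u < t" by simp
    then show ?thesis using less 3 by (simp add: Mf_even)
  next
    case (4 u) then have "u < t" "u + 1 < t" by simp_all
    then obtain p1 p2 where p1: "p1 > 0" "Mf u (complex_of_real x) = complex_of_real p1"
      and p2: "p2 > 0" "Mf (u+1) (complex_of_real x) = complex_of_real p2"
      using less by blast
    show ?thesis using 4 p1 p2
      by (intro exI[of _ "(exp x * p1 + exp (-x) * p2) / 2"])
         (simp add: Mf_odd Mf_odd' exp_of_real[symmetric] add_pos_pos)
  qed
qed



lemma real_deriv:
  assumes g: "g holomorphic_on ball 0 r"
    and re: "\<And>x. \<bar>x\<bar> < r \<Longrightarrow> g (complex_of_real x) \<in> \<real>"
    and x: "\<bar>x\<bar> < r"
  shows "deriv g (complex_of_real x) \<in> \<real>"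
proof -
  have xin: "complex_of_real x \<in> ball 0 r" using x by simp
  have d: "(g has_field_derivative deriv g (of_real x)) (at (of_real x))"
    by (rule holomorphic_derivI[OF g open_ball xin])
  have v: "((\<lambda>y. g (of_real y)) has_vector_derivative deriv g (of_real x)) (at x)"
    by (rule has_vector_derivative_real_field[OF d])
  have vi: "((\<lambda>y. Im (g (of_real y))) has_vector_derivative Im (deriv g (of_real x))) (at x)"
    using bounded_linear.has_vector_derivative[OF bounded_linear_Im v] by simp
  have v0: "((\<lambda>y. 0::real) has_vector_derivative 0) (at x)" by (rule has_vector_derivative_const)
  have v0': "((\<lambda>y. Im (g (of_real y))) has_vector_derivative 0) (at x)"
  proof (rule has_vector_derivative_transform_within_open[OF v0, of "{-r<..<r}"])
    show "open {-r<..<r}" by simp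
    show "x \<in> {-r<..<r}" using x by auto
    fix y assume "y \<in> {-r<..<r}"
    then have "\<bar>y\<bar> < r" by auto
    then show "0 = Im (g (of_real y))" using re complex_is_Real_iff by auto
  qed
  have "Im (deriv g (of_real x)) = 0" using vector_derivative_unique_at[OF vi v0'] by simp
  then show ?thesis by (simp add: complex_is_Real_iff)
qed

lemma real_higher_deriv:
  assumes "g holomorphic_on ball 0 r" "\<And>x. \<bar>x\<bar> < r \<Longrightarrow> g (complex_of_real x) \<in> \<real>" "\<bar>x\<bar> < r"
  shows "(deriv ^^ n) g (complex_of_real x) \<in> \<real>"
  using assms
proof (induction n arbitrary: g x)
  case 0 then show ?case by simp
next
  case (Suc n)
  have h: "deriv g holomorphic_on ball 0 r" by (rule holomorphic_deriv[OF Suc.prems(1) open_ball])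
  have "\<And>y. \<bar>y\<bar> < r \<Longrightarrow> deriv g (of_real y) \<in> \<real>"
    by (rule real_deriv[OF Suc.prems(1,2)])
  then have "(deriv ^^ n) (deriv g) (of_real x) \<in> \<real>" using Suc.IH[OF h] Suc.prems(3) by blast
  then show ?case by (simp add: funpow_Suc_right del: funpow.simps)
qed

lemma Mf_pos_ball: "\<exists>r>0. r \<le> 1/2 \<and> (\<forall>w\<in>ball 0 r. Re (Mf t w) > 0)"
proof -
  have "continuous_on (ball 0 (1/2)) (Mf t)"
    by (rule holomorphic_on_imp_continuous_on[OF Mf_holo])
  then have "\<forall>x\<in>ball 0 (1/2). isCont (Mf t) x" by (simp add: continuous_on_eq_continuous_at[OF open_ball])
  then have "isCont (Mf t) 0" by simp
  then obtain d where d: "d > 0" "\<And>x. dist x 0 < d \<Longrightarrow> dist (Mf t x) (Mf t 0) < 1"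
    unfolding continuous_at_eps_delta by (meson zero_less_one)
  define r where "r = min d (1/2)"
  have "r > 0" "r \<le> 1/2" using d by (auto simp: r_def)
  moreover have "Re (Mf t w) > 0" if "w \<in> ball 0 r" for w
  proof -
    have "dist w 0 < d" using that by (simp add: r_def dist_commute)
    then have "cmod (Mf t w - 1) < 1" using d(2)[of w] by (simp add: Mf_at0 dist_norm)
    moreover have "\<bar>Re (Mf t w - 1)\<bar> \<le> cmod (Mf t w - 1)" by (rule abs_Re_le_cmod)
    ultimately show ?thesis by simp
  qed
  ultimately show ?thesis by blast
qed

definition FL :: "nat \<Rightarrow> complex \<Rightarrow> complex" where
  "FL t w = Ln (Mf t w)"

lemma cum_char:
  obtains r where "r > 0" "r \<le> 1/2" "\<And>w. w \<in> ball 0 r \<Longrightarrow> Re (Mf t w) > 0"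
    "FL t holomorphic_on ball 0 r"
    "\<And>n. complex_of_real (cumulants t n) = (deriv ^^ n) (FL t) 0"
proof -
  obtain r where r: "r > 0" "r \<le> 1/2" "\<And>w. w \<in> ball 0 r \<Longrightarrow> Re (Mf t w) > 0"
    using Mf_pos_ball by blast
  have holo: "FL t holomorphic_on ball 0 r"
    unfolding FL_def[abs_def]
  proof (rule holomorphic_on_Ln')
    show "Mf t z \<notin> \<real>\<^sub>\<le>\<^sub>0" if "z \<in> ball 0 r" for z
      using r(3)[OF that] by (auto simp: complex_nonpos_Reals_iff)
    show "Mf t holomorphic_on ball 0 r"
      by (rule holomorphic_on_subset[OF Mf_holo]) (use r in auto)
  qed
  have realF: "FL t (complex_of_real x) \<in> \<real>" if "\<bar>x\<bar> < r" for x
  proof -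
    have "\<bar>x\<bar> < 1/2" using that r by simp
    then obtain p where p: "p > 0" "Mf t (complex_of_real x) = complex_of_real p"
      using Mf_real by blast
    then show ?thesis by (simp add: FL_def Ln_of_real)
  qed
  have der_real: "(deriv ^^ n) (FL t) 0 \<in> \<real>" for n
    using real_higher_deriv[OF holo realF, of 0] r by simp
  define \<kappa> where "\<kappa> n = Re ((deriv ^^ n) (FL t) 0)" for n
  have \<kappa>eq: "complex_of_real (\<kappa> n) = (deriv ^^ n) (FL t) 0" for n
    using der_real[of n] by (simp add: \<kappa>_def)
  have cpi: "cmod (2 * complex_of_real pi * \<i> * \<theta>) = 2 * pi * cmod \<theta>" for \<theta>
    by (simp add: norm_mult)
  have P: "\<exists>e>0. \<forall>\<theta>. cmod \<theta> < e \<longrightarrow>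
      ((\<lambda>j. complex_of_real (\<kappa> j) / of_nat (fact j) * (2 * complex_of_real pi * \<i> * \<theta>) ^ j)
         sums Ln (gamma_t t \<theta>))"
  proof (intro exI[of _ "r / (2*pi)"] conjI allI impI)
    show "r / (2*pi) > 0" using r by simp
    fix \<theta> :: complex assume th: "cmod \<theta> < r / (2*pi)"
    define w where "w = 2 * complex_of_real pi * \<i> * \<theta>"
    have cw: "cmod w = 2*pi*cmod \<theta>" unfolding w_def by (rule cpi)
    have "2*pi*cmod \<theta> < r" using th by (simp add: field_simps)
    then have "cmod w < r" by (simp only: cw)
    then have wb: "w \<in> ball 0 r" by simp
    have "cmod \<theta> < 1 / (4*pi)"
    proof -
      have "r / (2*pi) \<le> (1/2) / (2*pi)" using r by (intro divide_right_mono) auto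
      then show ?thesis using th by simp
    qed
    then have g: "gamma_t t \<theta> = Mf t w" by (simp add: gamma_Mf w_def)
    have "(\<lambda>n. (deriv ^^ n) (FL t) 0 / fact n * (w - 0) ^ n) sums FL t w"
      by (rule holomorphic_power_series[OF holo wb])
    then show "(\<lambda>j. complex_of_real (\<kappa> j) / of_nat (fact j) * w ^ j) sums Ln (gamma_t t \<theta>)"
      by (simp add: \<kappa>eq g FL_def)
  qed
  define Q where "Q = (\<lambda>\<kappa>::nat \<Rightarrow> real. \<exists>e>0. \<forall>\<theta>. cmod \<theta> < e \<longrightarrow>
      ((\<lambda>j. complex_of_real (\<kappa> j) / of_nat (fact j) * (2 * complex_of_real pi * \<i> * \<theta>) ^ j)
         sums Ln (gamma_t t \<theta>)))"
  have "Q \<kappa>" using P unfolding Q_def .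
  then have "Q (SOME \<kappa>. Q \<kappa>)" by (rule someI[where P=Q])
  moreover have "cumulants t = (SOME \<kappa>. Q \<kappa>)" unfolding cumulants_def Q_def ..
  ultimately have "Q (cumulants t)" by simp
  then have Pc: "\<exists>e>0. \<forall>\<theta>. cmod \<theta> < e \<longrightarrow>
      ((\<lambda>j. complex_of_real (cumulants t j) / of_nat (fact j) * (2 * complex_of_real pi * \<i> * \<theta>) ^ j)
         sums Ln (gamma_t t \<theta>))"
    unfolding Q_def .
  then obtain e where e: "e > 0" "\<And>\<theta>. cmod \<theta> < e \<Longrightarrow>
      ((\<lambda>j. complex_of_real (cumulants t j) / of_nat (fact j) * (2 * complex_of_real pi * \<i> * \<theta>) ^ j)
         sums Ln (gamma_t t \<theta>))" by blast
  define K where "K = Abs_fps (\<lambda>n. complex_of_real (cumulants t n) / fact n)"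
  have "FL t has_fps_expansion K"
  proof (rule has_fps_expansionI)
    have "eventually (\<lambda>u. u \<in> ball 0 (min r (2*pi*e))) (nhds 0)"
      by (rule eventually_nhds_in_open) (use r e in auto)
    then show "eventually (\<lambda>u. (\<lambda>n. fps_nth K n * u ^ n) sums FL t u) (nhds 0)"
    proof eventually_elim
      case (elim u)
      define \<theta> where "\<theta> = u / (2 * complex_of_real pi * \<i>)"
      have u: "u = 2 * complex_of_real pi * \<i> * \<theta>" by (simp add: \<theta>_def)
      have cu: "cmod u < r" "cmod u < 2*pi*e" using elim by auto
      have "cmod \<theta> = cmod u / (2*pi)" by (simp add: \<theta>_def norm_divide norm_mult)
      have "cmod u / (2*pi) < (2*pi*e) / (2*pi)" by (intro divide_strict_right_mono) (use cu in auto)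
      then have th1: "cmod \<theta> < e" using \<open>cmod \<theta> = cmod u / (2*pi)\<close> by simp
      have "cmod \<theta> < 1 / (4*pi)"
      proof -
        have "cmod u / (2*pi) < (1/2) / (2*pi)" using cu r by (intro divide_strict_right_mono) auto
        then show ?thesis using \<open>cmod \<theta> = cmod u / (2*pi)\<close> by simp
      qed
      then have g: "gamma_t t \<theta> = Mf t u" by (simp add: gamma_Mf u)
      show ?case using e(2)[OF th1] unfolding u[symmetric] g
        by (simp add: K_def FL_def of_nat_fact)
    qed
  qed
  then have fk: "fps_nth K n = (deriv ^^ n) (FL t) 0 / fact n" for n
    by (rule fps_nth_fps_expansion)
  have "complex_of_real (cumulants t n) = (deriv ^^ n) (FL t) 0" for n
    using fk[of n] fact_nonzero[of n, where 'a=complex] by (auto simp: K_def)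
  then show ?thesis using that r holo by blast
qed



lemma fps_unique:
  fixes f g :: "complex \<Rightarrow> complex"
  assumes "f has_fps_expansion F" "g has_fps_expansion G" "eventually (\<lambda>z. f z = g z) (nhds 0)"
  shows "F = G"
proof (rule fps_ext)
  fix n
  have "(deriv ^^ n) f 0 = (deriv ^^ n) g 0" by (rule higher_deriv_cong_ev[OF assms(3) refl])
  then show "fps_nth F n = fps_nth G n"
    by (simp add: fps_nth_fps_expansion[OF assms(1)] fps_nth_fps_expansion[OF assms(2)])
qed

definition Kf :: "nat \<Rightarrow> complex fps" where
  "Kf t = Abs_fps (\<lambda>n. complex_of_real (cumulants t n) / fact n)"

definition Ef :: "nat \<Rightarrow> complex fps" where
  "Ef t = fps_expansion (Mf t) 0"

lemma Kn: "fps_nth (Kf t) n = complex_of_real (cumulants t n) / fact n"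
  by (simp add: Kf_def)

lemma K_exp: "FL t has_fps_expansion Kf t"
proof -
  obtain r where r: "r > 0" "FL t holomorphic_on ball 0 r"
    "\<And>n. complex_of_real (cumulants t n) = (deriv ^^ n) (FL t) 0"
    using cum_char by metis
  have "FL t has_fps_expansion fps_expansion (FL t) 0"
    by (rule has_fps_expansion_fps_expansion[OF open_ball _ r(2)]) (use r in simp)
  moreover have "fps_expansion (FL t) 0 = Kf t"
    by (rule fps_ext) (simp add: fps_expansion_def Kf_def r(3))
  ultimately show ?thesis by simp
qed

lemma E_exp: "Mf t has_fps_expansion Ef t"
  unfolding Ef_def by (rule has_fps_expansion_fps_expansion[OF open_ball _ Mf_holo]) simp

lemma E_0: "fps_nth (Ef t) 0 = 1"
  by (simp add: Ef_def fps_expansion_def Mf_at0)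

lemma cum_0: "cumulants t 0 = 0"
proof -
  obtain r where r: "\<And>n. complex_of_real (cumulants t n) = (deriv ^^ n) (FL t) 0"
    using cum_char by metis
  have "complex_of_real (cumulants t 0) = 0" using r[of 0] by (simp add: FL_def Mf_at0)
  then show ?thesis by simp
qed

lemma ode: "fps_deriv (Ef t) = fps_deriv (Kf t) * Ef t"
proof -
  obtain r where r: "r > 0" "\<And>w. w \<in> ball 0 r \<Longrightarrow> Re (Mf t w) > 0"
    "FL t holomorphic_on ball 0 r"
    using cum_char by metis
  have "eventually (\<lambda>w. w \<in> ball 0 r) (nhds 0)"
    by (rule eventually_nhds_in_open) (use r in auto)
  then have ev: "eventually (\<lambda>w. deriv (Mf t) w = deriv (FL t) w * Mf t w) (nhds 0)"
  proof eventually_elim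
    case (elim w)
    have "eventually (\<lambda>v. v \<in> ball 0 r) (nhds w)"
      by (rule eventually_nhds_in_open) (use elim in auto)
    then have e1: "eventually (\<lambda>v. Mf t v = exp (FL t v)) (nhds w)"
    proof eventually_elim
      case (elim v)
      then have "Mf t v \<noteq> 0" using r(2)[of v] by auto
      then show ?case by (simp add: FL_def)
    qed
    have "deriv (Mf t) w = deriv (\<lambda>v. exp (FL t v)) w" by (rule deriv_cong_ev[OF e1 refl])
    also have "\<dots> = exp (FL t w) * deriv (FL t) w"
      by (rule DERIV_imp_deriv[OF DERIV_fun_exp[OF holomorphic_derivI[OF r(3) open_ball elim]]])
    also have "Mf t w \<noteq> 0" using r(2)[OF elim] by auto
    then have "exp (FL t w) = Mf t w" by (simp add: FL_def)
    finally show ?case by (simp add: mult.commute)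
  qed
  show ?thesis
    by (rule fps_unique[OF has_fps_expansion_deriv[OF E_exp] has_fps_expansion_mult[OF has_fps_expansion_deriv[OF K_exp] E_exp] ev])
qed

lemma mix: "Ef (2*t+1) = fps_const (1/2) * (fps_exp 1 * Ef t + fps_exp (-1) * Ef (t+1))"
proof -
  have H: "(\<lambda>x. 1/2 * (exp x * Mf t x + exp (-x) * Mf (t+1) x)) has_fps_expansion
      fps_const (1/2) * (fps_exp 1 * Ef t + fps_exp (-1) * Ef (t+1))"
    by (intro has_fps_expansion_cmult_left has_fps_expansion_add has_fps_expansion_mult
          has_fps_expansion_exp1 has_fps_expansion_exp_neg1 E_exp)
  have "eventually (\<lambda>w. w \<in> ball 0 (1/2)) (nhds 0)"
    by (rule eventually_nhds_in_open) auto
  then have ev: "eventually (\<lambda>w. Mf (2*t+1) w = 1/2 * (exp w * Mf t w + exp (-w) * Mf (t+1) w)) (nhds 0)"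
  proof eventually_elim
    case (elim w)
    show ?case
    proof (cases "t = 0")
      case True
      then show ?thesis using Mf_odd0[of w] elim by simp
    next
      case False
      then show ?thesis using Mf_odd[of t w] by simp
    qed
  qed
  show ?thesis by (rule fps_unique[OF E_exp H ev])
qed

lemma ode_coeff: "of_nat (Suc n) * fps_nth (Ef t) (Suc n) =
   (\<Sum>i=0..n. of_nat (Suc i) * fps_nth (Kf t) (Suc i) * fps_nth (Ef t) (n - i))"
  using arg_cong[OF ode[of t], of "\<lambda>F. fps_nth F n"] by (simp add: fps_mult_nth)

lemma mix_coeff: "fps_nth (Ef (2*t+1)) n =
   1/2 * ((\<Sum>i=0..n. fps_nth (fps_exp 1) i * fps_nth (Ef t) (n - i)) +
          (\<Sum>i=0..n. fps_nth (fps_exp (-1)) i * fps_nth (Ef (t+1)) (n - i)))"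
  by (subst mix) (simp only: fps_mult_left_const_nth, simp only: fps_add_nth fps_mult_nth)

lemma cum_even: "u \<ge> 1 \<Longrightarrow> cumulants (2*u) n = cumulants u n"
proof -
  assume u: "u \<ge> 1"
  obtain r1 where r1: "\<And>n. complex_of_real (cumulants (2*u) n) = (deriv ^^ n) (FL (2*u)) 0"
    using cum_char by metis
  obtain r2 where r2: "\<And>n. complex_of_real (cumulants u n) = (deriv ^^ n) (FL u) 0"
    using cum_char by metis
  have "FL (2*u) = FL u" using u by (intro ext) (simp add: FL_def Mf_even)
  then have "complex_of_real (cumulants (2*u) n) = complex_of_real (cumulants u n)"
    by (simp add: r1 r2)
  then show ?thesis by simp
qed

lemma cum_zero: "cumulants 0 n = 0"
proof -
  obtain r where r: "\<And>n. complex_of_real (cumulants 0 n) = (deriv ^^ n) (FL 0) 0"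
    using cum_char by metis
  have "FL 0 = (\<lambda>_. 0)" by (intro ext) (simp add: FL_def Mf0)
  then have "FL 0 has_fps_expansion 0" by simp
  then have "fps_nth 0 n = (deriv ^^ n) (FL 0) 0 / fact n" by (rule fps_nth_fps_expansion)
  then have "(deriv ^^ n) (FL 0) 0 = 0" by simp
  then show ?thesis using r[of n] by simp
qed



lemma E_vals:
  assumes c1: "cumulants t 1 = 0"
  shows "fps_nth (Ef t) 1 = 0 \<and>
    fps_nth (Ef t) 2 = complex_of_real (cumulants t 2) / 2 \<and>
    fps_nth (Ef t) 3 = complex_of_real (cumulants t 3) / 6 \<and>
    fps_nth (Ef t) 4 = complex_of_real (cumulants t 4) / 24 + (complex_of_real (cumulants t 2))^2 / 8 \<and>
    fps_nth (Ef t) 5 = complex_of_real (cumulants t 5) / 120 + complex_of_real (cumulants t 2) * complex_of_real (cumulants t 3) / 12"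
proof -
  note O = ode_coeff[of _ t]
  have a1: "cumulants t (Suc 0) = 0" using c1 by simp
  have e0: "fps_nth (Ef t) 0 = 1" by (rule E_0)
  have e1: "fps_nth (Ef t) 1 = 0"
    using O[of 0] by (simp add: Kn a1 e0)
  have e2: "fps_nth (Ef t) 2 = complex_of_real (cumulants t 2) / 2"
    using O[of 1] e1 by (simp add: Kn a1 e0 atLeast0_atMost_Suc eval_nat_numeral field_simps)
  have e1s: "fps_nth (Ef t) (Suc 0) = 0" using e1 by simp
  have e2s: "fps_nth (Ef t) (Suc (Suc 0)) = complex_of_real (cumulants t (Suc (Suc 0))) / 2"
    using e2 by (simp add: eval_nat_numeral)
  have e3: "fps_nth (Ef t) 3 = complex_of_real (cumulants t 3) / 6"
    using O[of 2] e1s e2s by (simp add: Kn a1 e0 atLeast0_atMost_Suc eval_nat_numeral field_simps)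
  have e3s: "fps_nth (Ef t) (Suc (Suc (Suc 0))) = complex_of_real (cumulants t (Suc (Suc (Suc 0)))) / 6"
    using e3 by (simp add: eval_nat_numeral)
  have e4: "fps_nth (Ef t) 4 = complex_of_real (cumulants t 4) / 24 + (complex_of_real (cumulants t 2))^2 / 8"
    using O[of 3] e1s e2s e3s by (simp add: Kn a1 e0 atLeast0_atMost_Suc eval_nat_numeral field_simps)
  have e4s: "fps_nth (Ef t) (Suc (Suc (Suc (Suc 0)))) = complex_of_real (cumulants t (Suc (Suc (Suc (Suc 0))))) / 24 + (complex_of_real (cumulants t (Suc (Suc 0))))^2 / 8"
    using e4 by (simp add: eval_nat_numeral)
  have e5: "fps_nth (Ef t) 5 = complex_of_real (cumulants t 5) / 120 + complex_of_real (cumulants t 2) * complex_of_real (cumulants t 3) / 12"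
    using O[of 4] by (simp add: Kn a1 e0 e1s e2s e3s e4s atLeast0_atMost_Suc eval_nat_numeral field_simps)
  show ?thesis using e1 e2 e3 e4 e5 by blast
qed

lemma rel1: "cumulants (2*t+1) 1 = (cumulants t 1 + cumulants (t+1) 1) / 2"
proof -
  have e: "fps_nth (Ef s) 1 = complex_of_real (cumulants s 1)" for s
    using ode_coeff[of 0 s] by (simp add: Kn E_0)
  have "fps_nth (Ef (2*t+1)) 1 = 1/2 * (fps_nth (Ef t) 1 + fps_nth (Ef (t+1)) 1)"
    using mix_coeff[of t 1] by (simp add: E_0 atLeast0_atMost_Suc)
  then have "complex_of_real (cumulants (2*t+1) 1) = complex_of_real ((cumulants t 1 + cumulants (t+1) 1) / 2)"
    by (simp only: e) simp
  then show ?thesis by (simp only: of_real_eq_iff)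
qed

lemma cum1: "cumulants t 1 = 0"
proof (induction t rule: less_induct)
  case (less t)
  show ?case
  proof (cases t rule: t_cases)
    case 1 then show ?thesis by (simp add: cum_zero)
  next
    case 2
    have "cumulants 1 1 = (cumulants 0 1 + cumulants 1 1) / 2" using rel1[of 0] by simp
    then show ?thesis using 2 by (simp add: cum_zero)
  next
    case (3 u) then have "u < t" by simp
    then show ?thesis using less 3 by (simp add: cum_even)
  next
    case (4 u) then have "u < t" "u + 1 < t" by simp_all
    then show ?thesis using less 4 rel1[of u] by simp
  qed
qed



lemma Es:
  "fps_nth (Ef t) (Suc 0) = 0"
  "fps_nth (Ef t) (Suc (Suc 0)) = complex_of_real (cumulants t (Suc (Suc 0))) / 2"
  "fps_nth (Ef t) (Suc (Suc (Suc 0))) = complex_of_real (cumulants t (Suc (Suc (Suc 0)))) / 6"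
  "fps_nth (Ef t) (Suc (Suc (Suc (Suc 0)))) = complex_of_real (cumulants t (Suc (Suc (Suc (Suc 0))))) / 24 + (complex_of_real (cumulants t (Suc (Suc 0))))^2 / 8"
  "fps_nth (Ef t) (Suc (Suc (Suc (Suc (Suc 0))))) = complex_of_real (cumulants t (Suc (Suc (Suc (Suc (Suc 0)))))) / 120 + complex_of_real (cumulants t (Suc (Suc 0))) * complex_of_real (cumulants t (Suc (Suc (Suc 0)))) / 12"
  using E_vals[OF cum1[of t]] by (simp_all add: eval_nat_numeral)

lemma rel2: "cumulants (2*t+1) 2 = (cumulants t 2 + cumulants (t+1) 2) / 2 + 1"
proof -
  have "complex_of_real (cumulants (2*t+1) 2) = complex_of_real ((cumulants t 2 + cumulants (t+1) 2) / 2 + 1)"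
    using mix_coeff[of t 2] by (simp add: Es E_0 atLeast0_atMost_Suc eval_nat_numeral field_simps) algebra
  then show ?thesis by (simp only: of_real_eq_iff)
qed

lemma rel3: "cumulants (2*t+1) 3 = (cumulants t 3 + cumulants (t+1) 3) / 2 + 3/2 * (cumulants t 2 - cumulants (t+1) 2)"
proof -
  have "complex_of_real (cumulants (2*t+1) 3) = complex_of_real ((cumulants t 3 + cumulants (t+1) 3) / 2 + 3/2 * (cumulants t 2 - cumulants (t+1) 2))"
    using mix_coeff[of t 3] by (simp add: Es E_0 atLeast0_atMost_Suc eval_nat_numeral field_simps) algebra
  then show ?thesis by (simp only: of_real_eq_iff)
qed

lemma rel2c: "complex_of_real (cumulants (Suc (2*t)) (Suc (Suc 0))) =
   (complex_of_real (cumulants t (Suc (Suc 0))) + complex_of_real (cumulants (Suc t) (Suc (Suc 0)))) / 2 + 1"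
  using arg_cong[OF rel2[of t], of complex_of_real] by (simp add: eval_nat_numeral)

lemma rel3c: "complex_of_real (cumulants (Suc (2*t)) (Suc (Suc (Suc 0)))) =
   (complex_of_real (cumulants t (Suc (Suc (Suc 0)))) + complex_of_real (cumulants (Suc t) (Suc (Suc (Suc 0))))) / 2
   + 3/2 * (complex_of_real (cumulants t (Suc (Suc 0))) - complex_of_real (cumulants (Suc t) (Suc (Suc 0))))"
  using arg_cong[OF rel3[of t], of complex_of_real] by (simp add: eval_nat_numeral)

lemma rel4: "cumulants (2*t+1) 4 = (cumulants t 4 + cumulants (t+1) 4) / 2 + 2 * (cumulants t 3 - cumulants (t+1) 3)
                        + 3/4 * (cumulants t 2 - cumulants (t+1) 2)^2 - 2"
proof -
  have "complex_of_real (cumulants (2*t+1) 4) = complex_of_real ((cumulants t 4 + cumulants (t+1) 4) / 2 + 2 * (cumulants t 3 - cumulants (t+1) 3)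
                        + 3/4 * (cumulants t 2 - cumulants (t+1) 2)^2 - 2)"
    using mix_coeff[of t 4] rel2c[of t] by (simp add: Es E_0 atLeast0_atMost_Suc eval_nat_numeral field_simps power2_eq_square) algebra
  then show ?thesis by (simp only: of_real_eq_iff)
qed

lemma rel5: "cumulants (2*t+1) 5 = (cumulants t 5 + cumulants (t+1) 5) / 2 + 5/2 * (cumulants t 4 - cumulants (t+1) 4)
                        + 5/2 * (cumulants t 2 - cumulants (t+1) 2) * (cumulants t 3 - cumulants (t+1) 3)
                        - 10 * (cumulants t 2 - cumulants (t+1) 2)"
proof -
  have "complex_of_real (cumulants (2*t+1) 5) = complex_of_real ((cumulants t 5 + cumulants (t+1) 5) / 2 + 5/2 * (cumulants t 4 - cumulants (t+1) 4)
                        + 5/2 * (cumulants t 2 - cumulants (t+1) 2) * (cumulants t 3 - cumulants (t+1) 3)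
                        - 10 * (cumulants t 2 - cumulants (t+1) 2))"
    using mix_coeff[of t 5] rel2c[of t] rel3c[of t] by (simp add: Es E_0 atLeast0_atMost_Suc eval_nat_numeral field_simps power2_eq_square) algebra
  then show ?thesis by (simp only: of_real_eq_iff)
qed



theorem lemma2p1:
  shows "(\<forall>t::nat.
      kappa 2 (2*t+1) = (kappa 2 t + kappa 2 (t+1)) / 2 + 1 \<and>
      kappa 3 (2*t+1) = (kappa 3 t + kappa 3 (t+1)) / 2 + 3/2 * (kappa 2 t - kappa 2 (t+1)) \<and>
      kappa 4 (2*t+1) = (kappa 4 t + kappa 4 (t+1)) / 2 + 2 * (kappa 3 t - kappa 3 (t+1))
                        + 3/4 * (kappa 2 t - kappa 2 (t+1))^2 - 2 \<and>
      kappa 5 (2*t+1) = (kappa 5 t + kappa 5 (t+1)) / 2 + 5/2 * (kappa 4 t - kappa 4 (t+1))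
                        + 5/2 * (kappa 2 t - kappa 2 (t+1)) * (kappa 3 t - kappa 3 (t+1))
                        - 10 * (kappa 2 t - kappa 2 (t+1)))
    \<and> kappa 2 1 = 2 \<and> kappa 3 1 = -6 \<and> kappa 4 1 = 26 \<and> kappa 5 1 = -150"
proof -
  have R: "\<forall>t::nat.
      kappa 2 (2*t+1) = (kappa 2 t + kappa 2 (t+1)) / 2 + 1 \<and>
      kappa 3 (2*t+1) = (kappa 3 t + kappa 3 (t+1)) / 2 + 3/2 * (kappa 2 t - kappa 2 (t+1)) \<and>
      kappa 4 (2*t+1) = (kappa 4 t + kappa 4 (t+1)) / 2 + 2 * (kappa 3 t - kappa 3 (t+1))
                        + 3/4 * (kappa 2 t - kappa 2 (t+1))^2 - 2 \<and>
      kappa 5 (2*t+1) = (kappa 5 t + kappa 5 (t+1)) / 2 + 5/2 * (kappa 4 t - kappa 4 (t+1))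
                        + 5/2 * (kappa 2 t - kappa 2 (t+1)) * (kappa 3 t - kappa 3 (t+1))
                        - 10 * (kappa 2 t - kappa 2 (t+1))"
    unfolding kappa_def using rel2 rel3 rel4 rel5 by blast
  have z: "kappa j 0 = 0" for j by (simp add: kappa_def cum_zero)
  have r0: "kappa 2 1 = (kappa 2 0 + kappa 2 1) / 2 + 1"
      "kappa 3 1 = (kappa 3 0 + kappa 3 1) / 2 + 3/2 * (kappa 2 0 - kappa 2 1)"
      "kappa 4 1 = (kappa 4 0 + kappa 4 1) / 2 + 2 * (kappa 3 0 - kappa 3 1)
                        + 3/4 * (kappa 2 0 - kappa 2 1)^2 - 2"
      "kappa 5 1 = (kappa 5 0 + kappa 5 1) / 2 + 5/2 * (kappa 4 0 - kappa 4 1)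
                        + 5/2 * (kappa 2 0 - kappa 2 1) * (kappa 3 0 - kappa 3 1)
                        - 10 * (kappa 2 0 - kappa 2 1)"
    using R[rule_format, of 0] by simp_all
  have k2: "kappa 2 1 = 2" using r0(1) z[of 2] by (simp add: field_simps)
  have k3: "kappa 3 1 = -6" using r0(2) z[of 3] z[of 2] k2 by (simp add: field_simps)
  have k4: "kappa 4 1 = 26"
  proof -
    have "kappa 4 1 = (kappa 4 0 + kappa 4 1) / 2 + 2 * (0 - (-6)) + 3/4 * (0 - 2)^2 - 2"
      using r0(3) z[of 3] z[of 2] k2 k3 by simp
    then show ?thesis using z[of 4] by (simp add: field_simps)
  qed
  have k5: "kappa 5 1 = -150"
  proof -
    have "kappa 5 1 = (kappa 5 0 + kappa 5 1) / 2 + 5/2 * (0 - 26) + 5/2 * (0 - 2) * (0 - (-6)) - 10 * (0 - 2)"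
      using r0(4) z[of 4] z[of 3] z[of 2] k2 k3 k4 by simp
    then show ?thesis using z[of 5] by (simp add: field_simps)
  qed
  show ?thesis using R k2 k3 k4 k5 by blast
qed

end
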